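(* Consider the linear (ReLU-free) encoder-decoder network described in the context. Fix $\alpha>0$. (1) (No skipped connection.) Suppose that for all $l\in[\kappa]$, $$\tilde\Phi^l\Phi^{l\top}=\alpha I_{m_{l-1}},\qquad \Psi^l\tilde\Psi^{l\top}=\frac{1}{r\alpha}I_{rq_{l-1}}.$$ Then, with $B=E^1E^2\cdots E^\kappa\in\mathbb R^{d_0\times d_\kappa}$ and $\tilde B=D^1D^2\cdots D^\kappa\in\mathbb R^{d_0\times d_\kappa}$, with columns $b_i,\tilde b_i$, one has $\tilde BB^\top=I_{d_0}$, i.e. $x=\sum_i\langle b_i,x\rangle\tilde b_i$ for every $x\in\mathbb R^{d_0}$; moreover the linear network without skipped connections satisfies $F(x)=\tilde BB^\top x$. (2) (With skipped connections.) Suppose that for all $l\in[\kappa]$, $$\tilde\Phi^l\Phi^{l\top}=\alpha I_{m_{l-1}},\qquad \Psi^l\tilde\Psi^{l\top}=\frac{1}{r(\alpha+1)}I_{rq_{l-1}}.$$ Define the $d_0\times(d_\kappa+\sum_{l=1}^\kappa s_l)$ matrices $$B^{skp}=\big[\,E^1\cdots E^\kappa,\ E^1\cdots E^{\kappa-1}S^\kappa,\ \dots,\ E^1S^2,\ S^1\,\big],\qquad \tilde B^{skp}=\big[\,D^1\cdots D^\kappa,\ D^1\cdots D^{\kappa-1}\tilde S^\kappa,\ \dots,\ D^1\tilde S^2,\ \tilde S^1\,\big].$$ Then the linear network with skipped connections satisfies $F(x)=\tilde B^{skp}B^{skp\top}x$, and $\tilde B^{skp}B^{skp\top}=I_{d_0}$,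 i.e. $x=\sum_i\langle b_i,x\rangle\tilde b_i$ with $b_i,\tilde b_i$ the columns of $B^{skp},\tilde B^{skp}$.
   Context: Conventions. For $m\ge1$, vectors in $\mathbb R^m$ are indexed $0,\dots,m-1$ with indices taken modulo $m$. For $u,v\in\mathbb R^m$ the circular convolution is $(u\circledast v)[n]=\sum_{k=0}^{m-1}u[k]\,v[n-k]$; a vector of length $r\le m$ is identified with its zero-padding to length $m$ when convolved with length-$m$ vectors. For a matrix $A=[a_1\cdots a_p]\in\mathbb R^{m\times p}$ and $\psi\in\mathbb R^r$, $A\circledast\psi:=[a_1\circledast\psi\ \cdots\ a_p\circledast\psi]\in\mathbb R^{m\times p}$. $[n]=\{1,\dots,n\}$. Architecture. Fix depth $\kappa\ge1$, channel numbers $q_0,\dots,q_\kappa$, channel lengths $m_0,\dots,m_\kappa$ and a filter length $r$ with $r\le m_l$ for all $l$; set $d_l=m_lq_l$ and $s_l=m_{l-1}q_l$. For each $l\in[\kappa]$ there are encoder filters $\psi^l_{j,k}\in\mathbb R^r$ ($j\in[q_l]$, $k\in[q_{l-1}]$), a pooling matrix $\Phi^l\in\mathbb R^{m_{l-1}\times m_l}$, decoder filters $\tilde\psi^l_{j,k}\in\mathbb R^r$ ($j\in[q_{l-1}]$, $k\in[q_l]$) and an unpooling matrix $\tilde\Phi^l\in\mathbb R^{m_{l-1}\times m_l}$. Define block matrices: $E^l\in\mathbb R^{d_{l-1}\times d_l}$ with $(k,j)$ block ($k\in[q_{l-1}],j\in[q_l]$) equal to $\Phi^l\circledast\psi^l_{j,k}$;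 $D^l\in\mathbb R^{d_{l-1}\times d_l}$ with $(j,k)$ block ($j\in[q_{l-1}],k\in[q_l]$) equal to $\tilde\Phi^l\circledast\tilde\psi^l_{j,k}$; $S^l\in\mathbb R^{d_{l-1}\times s_l}$ with $(k,j)$ block $I_{m_{l-1}}\circledast\psi^l_{j,k}$; $\tilde S^l\in\mathbb R^{d_{l-1}\times s_l}$ with $(j,k)$ block $I_{m_{l-1}}\circledast\tilde\psi^l_{j,k}$. Filter matrices: $\Psi^l\in\mathbb R^{rq_{l-1}\times q_l}$ whose $(k,j)$ block (an $r\times1$ column) is $\psi^l_{j,k}$, and $\tilde\Psi^l\in\mathbb R^{rq_{l-1}\times q_l}$ whose $(j,k)$ block is $\tilde\psi^l_{j,k}$. Linear network (no ReLU). Without skipped connections: $\xi^0=x\in\mathbb R^{d_0}$, $\xi^l=E^{l\top}\xi^{l-1}$ ($l\in[\kappa]$), $\tilde\xi^\kappa=\xi^\kappa$, $\tilde\xi^{l-1}=D^l\tilde\xi^l$, $F(x)=\tilde\xi^0$. With skipped connections: additionally $\chi^l=S^{l\top}\xi^{l-1}$ and the decoder is $\tilde\xi^{l-1}=D^l\tilde\xi^l+\tilde S^l\chi^l$, $F(x)=\tilde\xi^0$. *)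

theory Defs
  imports "Jordan_Normal_Form.Matrix"
begin

text \<open>Conventions: channel/filter indices j, k are 0-based (j < q l instead of j in [q l]);
  layer indices l range over 1..kappa; vectors of length m indexed 0..m-1, indices mod m.\<close>

definition pad :: "real vec \<Rightarrow> nat \<Rightarrow> real" where
  "pad \<psi> j = (if j < dim_vec \<psi> then \<psi> $ j else 0)"

definition cconv :: "real mat \<Rightarrow> real vec \<Rightarrow> real mat" where
  "cconv A \<psi> = mat (dim_row A) (dim_col A)
     (\<lambda>(i,c). \<Sum>k<dim_row A. A $$ (k,c) * pad \<psi> ((i + dim_row A - k) mod dim_row A))"

definition blockmat :: "nat \<Rightarrow> nat \<Rightarrow> nat \<Rightarrow> nat \<Rightarrow> (nat \<Rightarrow> nat \<Rightarrow> real mat) \<Rightarrow> real mat" where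
  "blockmat p q a b M = mat (p*a) (q*b) (\<lambda>(i,j). M (i div a) (j div b) $$ (i mod a, j mod b))"

text \<open>psi l j k = encoder filter psi^l_{j,k} (j < q l, k < q (l-1));
      psit l j k = decoder filter psit^l_{j,k} (j < q (l-1), k < q l).\<close>

definition encE :: "(nat \<Rightarrow> nat) \<Rightarrow> (nat \<Rightarrow> nat) \<Rightarrow> (nat \<Rightarrow> real mat)
    \<Rightarrow> (nat \<Rightarrow> nat \<Rightarrow> nat \<Rightarrow> real vec) \<Rightarrow> nat \<Rightarrow> real mat" where
  "encE m q \<Phi> \<psi> l = blockmat (q (l-1)) (q l) (m (l-1)) (m l) (\<lambda>k j. cconv (\<Phi> l) (\<psi> l j k))"

definition decD :: "(nat \<Rightarrow> nat) \<Rightarrow> (nat \<Rightarrow> nat) \<Rightarrow> (nat \<Rightarrow> real mat)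
    \<Rightarrow> (nat \<Rightarrow> nat \<Rightarrow> nat \<Rightarrow> real vec) \<Rightarrow> nat \<Rightarrow> real mat" where
  "decD m q \<Phi>t \<psi>t l = blockmat (q (l-1)) (q l) (m (l-1)) (m l) (\<lambda>j k. cconv (\<Phi>t l) (\<psi>t l j k))"

definition skipS :: "(nat \<Rightarrow> nat) \<Rightarrow> (nat \<Rightarrow> nat)
    \<Rightarrow> (nat \<Rightarrow> nat \<Rightarrow> nat \<Rightarrow> real vec) \<Rightarrow> nat \<Rightarrow> real mat" where
  "skipS m q \<psi> l = blockmat (q (l-1)) (q l) (m (l-1)) (m (l-1))
      (\<lambda>k j. cconv (1\<^sub>m (m (l-1))) (\<psi> l j k))"

definition skipSt :: "(nat \<Rightarrow> nat) \<Rightarrow> (nat \<Rightarrow> nat)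
    \<Rightarrow> (nat \<Rightarrow> nat \<Rightarrow> nat \<Rightarrow> real vec) \<Rightarrow> nat \<Rightarrow> real mat" where
  "skipSt m q \<psi>t l = blockmat (q (l-1)) (q l) (m (l-1)) (m (l-1))
      (\<lambda>j k. cconv (1\<^sub>m (m (l-1))) (\<psi>t l j k))"

text \<open>Filter matrices Psi^l (block (k,j) = psi^l_{j,k}) and Psit^l (block (j,k) = psit^l_{j,k}),
  both of size (r q_{l-1}) x q_l; entry (u*r+t, v) is entry t of the filter in block (u,v).\<close>
definition filtPsi :: "nat \<Rightarrow> (nat \<Rightarrow> nat) \<Rightarrow> (nat \<Rightarrow> nat \<Rightarrow> nat \<Rightarrow> real vec) \<Rightarrow> nat \<Rightarrow> real mat" where
  "filtPsi r q \<psi> l = mat (r * q (l-1)) (q l) (\<lambda>(i,c). \<psi> l c (i div r) $ (i mod r))"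

definition filtPsit :: "nat \<Rightarrow> (nat \<Rightarrow> nat) \<Rightarrow> (nat \<Rightarrow> nat \<Rightarrow> nat \<Rightarrow> real vec) \<Rightarrow> nat \<Rightarrow> real mat" where
  "filtPsit r q \<psi>t l = mat (r * q (l-1)) (q l) (\<lambda>(i,c). \<psi>t l (i div r) c $ (i mod r))"

fun chain :: "(nat \<Rightarrow> real mat) \<Rightarrow> nat \<Rightarrow> nat \<Rightarrow> real mat" where
  "chain M n 0 = 1\<^sub>m n"
| "chain M n (Suc k) = chain M n k * M (Suc k)"

definition hcat :: "real mat \<Rightarrow> real mat \<Rightarrow> real mat" where
  "hcat A B = mat (dim_row A) (dim_col A + dim_col B)
     (\<lambda>(i,j). if j < dim_col A then A $$ (i,j) else B $$ (i, j - dim_col A))"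

text \<open>[M1...Mk, M1...M(k-1) S k, ..., M1 S 2, S 1].\<close>
definition skip_frame :: "(nat \<Rightarrow> real mat) \<Rightarrow> (nat \<Rightarrow> real mat) \<Rightarrow> nat \<Rightarrow> nat \<Rightarrow> real mat" where
  "skip_frame M S n k = foldl hcat (chain M n k) (map (\<lambda>l. chain M n (l-1) * S l) (rev [1..<Suc k]))"

fun enc :: "(nat \<Rightarrow> real mat) \<Rightarrow> real vec \<Rightarrow> nat \<Rightarrow> real vec" where
  "enc E x 0 = x"
| "enc E x (Suc l) = transpose_mat (E (Suc l)) *\<^sub>v enc E x l"

fun dec :: "(nat \<Rightarrow> real mat) \<Rightarrow> nat \<Rightarrow> real vec \<Rightarrow> real vec" where
  "dec D 0 v = v"
| "dec D (Suc k) v = dec D k (D (Suc k) *\<^sub>v v)"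

fun dec_skip :: "(nat \<Rightarrow> real mat) \<Rightarrow> (nat \<Rightarrow> real mat) \<Rightarrow> (nat \<Rightarrow> real vec) \<Rightarrow> nat \<Rightarrow> real vec \<Rightarrow> real vec" where
  "dec_skip D St chi 0 v = v"
| "dec_skip D St chi (Suc k) v = dec_skip D St chi k (D (Suc k) *\<^sub>v v + St (Suc k) *\<^sub>v chi (Suc k))"

definition net_noskip :: "(nat \<Rightarrow> real mat) \<Rightarrow> (nat \<Rightarrow> real mat) \<Rightarrow> nat \<Rightarrow> real vec \<Rightarrow> real vec" where
  "net_noskip E D \<kappa> x = dec D \<kappa> (enc E x \<kappa>)"

definition net_skip :: "(nat \<Rightarrow> real mat) \<Rightarrow> (nat \<Rightarrow> real mat) \<Rightarrow> (nat \<Rightarrow> real mat) \<Rightarrow> (nat \<Rightarrow> real mat)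
    \<Rightarrow> nat \<Rightarrow> real vec \<Rightarrow> real vec" where
  "net_skip E D S St \<kappa> x =
     dec_skip D St (\<lambda>l. transpose_mat (S l) *\<^sub>v enc E x (l-1)) \<kappa> (enc E x \<kappa>)"

definition frame_expand :: "real mat \<Rightarrow> real mat \<Rightarrow> real vec \<Rightarrow> real vec" where
  "frame_expand B Bt x = vec (dim_row Bt) (\<lambda>a. \<Sum>i<dim_col B. (col B i \<bullet> x) * (col Bt i $ a))"

end

theory Submission
  imports Defs
begin

lemma sum_split_mult:
  fixes h :: "nat \<Rightarrow> real"
  shows "(\<Sum>c<q*b. h c) = (\<Sum>v<q. \<Sum>w<b. h (v*b + w))"
proof -
  have eq: "sum h {v*b..<v*b+b} = (\<Sum>w<b. h (v*b + w))" for v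
  proof -
    have "sum h {0+v*b..<b+v*b} = (\<Sum>w=0..<b. h (w + v*b))"
      by (rule sum.shift_bounds_nat_ivl)
    then show ?thesis
      by (simp add: atLeast0LessThan add.commute)
  qed
  have "(\<Sum>c<q*b. h c) = (\<Sum>v<q. sum h {v*b..<v*b+b})"
    using sum.nat_group[of h b q] by simp
  also have "\<dots> = (\<Sum>v<q. \<Sum>w<b. h (v*b + w))"
    by (simp add: eq)
  finally show ?thesis .
qed


definition circ :: "nat \<Rightarrow> real vec \<Rightarrow> real mat" where
  "circ n \<psi> = mat n n (\<lambda>(i,k). pad \<psi> ((i + n - k) mod n))"

lemma circ_carrier[simp]: "circ n \<psi> \<in> carrier_mat n n"
  by (simp add: circ_def)

lemma cconv_circ: "cconv A \<psi> = circ (dim_row A) \<psi> * A"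
  by (rule eq_matI) (auto simp: cconv_def circ_def scalar_prod_def mult.commute atLeast0LessThan intro: sum.cong)

lemma blockmat_mult_T_entry:
  assumes i: "i < p*a" and i': "i' < p'*a'"
    and M: "\<And>v. v<q \<Longrightarrow> M (i div a) v \<in> carrier_mat a b"
    and N: "\<And>v. v<q \<Longrightarrow> N (i' div a') v \<in> carrier_mat a' b"
  shows "(blockmat p q a b M * transpose_mat (blockmat p' q a' b N)) $$ (i,i')
     = (\<Sum>v<q. (M (i div a) v * transpose_mat (N (i' div a') v)) $$ (i mod a, i' mod a'))"
proof -
  have a: "0<a" using i by (cases a) auto
  have a': "0<a'" using i' by (cases a') auto
  have "(blockmat p q a b M * transpose_mat (blockmat p' q a' b N)) $$ (i,i')
     = (\<Sum>c<q*b. M (i div a) (c div b) $$ (i mod a, c mod b) * N (i' div a') (c div b) $$ (i' mod a', c mod b))"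
    using i i' by (simp add: blockmat_def scalar_prod_def atLeast0LessThan)
  also have "\<dots> = (\<Sum>v<q. \<Sum>w<b. M (i div a) ((v*b+w) div b) $$ (i mod a, (v*b+w) mod b) * N (i' div a') ((v*b+w) div b) $$ (i' mod a', (v*b+w) mod b))"
    by (rule sum_split_mult)
  also have "\<dots> = (\<Sum>v<q. \<Sum>w<b. M (i div a) v $$ (i mod a, w) * N (i' div a') v $$ (i' mod a', w))"
  proof (intro sum.cong refl)
    fix v w assume "w \<in> {..<b}"
    then have "w < b" by simp
    then have "(v*b+w) div b = v" "(v*b+w) mod b = w" by auto
    then show "M (i div a) ((v*b+w) div b) $$ (i mod a, (v*b+w) mod b) * N (i' div a') ((v*b+w) div b) $$ (i' mod a', (v*b+w) mod b)
      = M (i div a) v $$ (i mod a, w) * N (i' div a') v $$ (i' mod a', w)" by simp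
  qed
  also have "\<dots> = (\<Sum>v<q. (M (i div a) v * transpose_mat (N (i' div a') v)) $$ (i mod a, i' mod a'))"
  proof (intro sum.cong refl)
    fix v assume "v \<in> {..<q}"
    then have "M (i div a) v \<in> carrier_mat a b" "N (i' div a') v \<in> carrier_mat a' b" using M N by auto
    then show "(\<Sum>w<b. M (i div a) v $$ (i mod a, w) * N (i' div a') v $$ (i' mod a', w))
      = (M (i div a) v * transpose_mat (N (i' div a') v)) $$ (i mod a, i' mod a')"
      using a a' by (simp add: scalar_prod_def atLeast0LessThan)
  qed
  finally show ?thesis .
qed


lemma circ_dims[simp]: "dim_row (circ n \<psi>) = n" "dim_col (circ n \<psi>) = n"
  by (simp_all add: circ_def)

lemma circ_prod:
  fixes A A' G F :: "real mat"
  assumes A: "A \<in> carrier_mat n m1" and A': "A' \<in> carrier_mat n m1"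
    and AA: "A' * transpose_mat A = \<beta> \<cdot>\<^sub>m 1\<^sub>m n"
    and G: "G \<in> carrier_mat n n" and F: "F \<in> carrier_mat n n"
  shows "(G * A') * transpose_mat (F * A) = \<beta> \<cdot>\<^sub>m (G * transpose_mat F)"
proof -
  have "transpose_mat (F * A) = transpose_mat A * transpose_mat F"
    using F A by (rule transpose_mult)
  moreover have c: "transpose_mat A * transpose_mat F \<in> carrier_mat m1 n" using A F by simp
  ultimately have "(G * A') * transpose_mat (F * A) = G * (A' * (transpose_mat A * transpose_mat F))"
    using assoc_mult_mat[OF G A' c] by simp
  also have "A' * (transpose_mat A * transpose_mat F) = (A' * transpose_mat A) * transpose_mat F"
    using A A' F by simp
  also have "\<dots> = \<beta> \<cdot>\<^sub>m transpose_mat F"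
    unfolding AA using F by (simp add: mult_smult_assoc_mat[of _ n n])
  also have "G * (\<beta> \<cdot>\<^sub>m transpose_mat F) = \<beta> \<cdot>\<^sub>m (G * transpose_mat F)"
    using G F by (simp add: mult_smult_distrib[of _ n n])
  finally show ?thesis .
qed

lemma modform: "(x::nat) < n \<Longrightarrow> a < n \<Longrightarrow> (x + n - a) mod n = (if a \<le> x then x - a else x + n - a)"
proof (cases "a \<le> x")
  case True
  assume "x < n" "a < n"
  then have eq: "x + n - a = (x - a) + n" using True by linarith
  have "(x + n - a) mod n = ((x - a) + n) mod n" by (simp only: eq)
  also have "\<dots> = (x - a) mod n" by simp
  also have "\<dots> = x - a" using \<open>x<n\<close> by simp
  finally show ?thesis using True by simp
next
  case False
  assume "x < n" "a < n"
  then show ?thesis using False by simp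
qed

lemma reindex_circ:
  fixes h :: "nat \<Rightarrow> real"
  assumes x: "x < n"
  shows "(\<Sum>a<n. h ((x + n - a) mod n)) = (\<Sum>t<n. h t)"
proof (rule sum.reindex_bij_witness[where i="\<lambda>t. (x + n - t) mod n" and j="\<lambda>t. (x + n - t) mod n"])
  fix a assume "a \<in> {..<n}"
  then have a: "a < n" by simp
  have t: "(x + n - a) mod n < n" using a by simp
  show "(x + n - (x + n - a) mod n) mod n = a"
  proof (cases "a \<le> x")
    case True
    then have e: "(x + n - a) mod n = x - a" using x a by (simp add: modform)
    have "x - a < n" "x - a \<le> x" using x by auto
    then show ?thesis using e x a True by (simp add: modform)
  next
    case False
    then have e: "(x + n - a) mod n = x + n - a" using x a by (simp add: modform)
    have "x + n - a < n" "\<not> x + n - a \<le> x" "x + n - (x + n - a) = a" using x a False by auto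
    then show ?thesis using e x a False by (simp add: modform)
  qed
  show "(x + n - a) mod n \<in> {..<n}" using t by simp
next
  fix a assume "a \<in> {..<n}"
  then have a: "a < n" by simp
  have t: "(x + n - a) mod n < n" using a by simp
  show "(x + n - (x + n - a) mod n) mod n = a"
  proof (cases "a \<le> x")
    case True
    then have e: "(x + n - a) mod n = x - a" using x a by (simp add: modform)
    have "x - a < n" "x - a \<le> x" using x by auto
    then show ?thesis using e x a True by (simp add: modform)
  next
    case False
    then have e: "(x + n - a) mod n = x + n - a" using x a by (simp add: modform)
    have "x + n - a < n" "\<not> x + n - a \<le> x" "x + n - (x + n - a) = a" using x a False by auto
    then show ?thesis using e x a False by (simp add: modform)
  qed
  show "(x + n - a) mod n \<in> {..<n}" using t by simp
  show "h ((x + n - a) mod n) = h ((x + n - a) mod n)" by simp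
qed

lemma circ_circ_T_entry:
  assumes "x < n" "y < n"
  shows "(circ n g * transpose_mat (circ n f)) $$ (x,y)
    = (\<Sum>a<n. pad g ((x + n - a) mod n) * pad f ((y + n - a) mod n))"
  using assms by (simp add: circ_def scalar_prod_def atLeast0LessThan)


lemma inner_sum:
  assumes fdim: "\<forall>v<Q1. dim_vec (f v k') = r" and gdim: "\<forall>v<Q1. dim_vec (g j v) = r"
    and cond: "\<forall>t<r. \<forall>t'<r. (\<Sum>v<Q1. f v k' $ t * g j v $ t') = (if k' = j \<and> t = t' then c else 0)"
  shows "(\<Sum>v<Q1. pad (g j v) t' * pad (f v k') t) = (if k' = j \<and> t = t' \<and> t < r then c else 0)"
proof (cases "t < r \<and> t' < r")
  case True
  then have "(\<Sum>v<Q1. pad (g j v) t' * pad (f v k') t) = (\<Sum>v<Q1. f v k' $ t * g j v $ t')"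
    using fdim gdim by (intro sum.cong refl) (simp add: pad_def mult.commute)
  then show ?thesis using cond True by simp
next
  case False
  then have "(\<Sum>v<Q1. pad (g j v) t' * pad (f v k') t) = 0"
    using fdim gdim by (intro sum.neutral) (auto simp: pad_def)
  then show ?thesis using False by auto
qed

lemma layer:
  fixes A A' :: "real mat" and f g :: "nat \<Rightarrow> nat \<Rightarrow> real vec"
  assumes rn: "r \<le> n"
    and A: "A \<in> carrier_mat n m1" and A': "A' \<in> carrier_mat n m1"
    and AA: "A' * transpose_mat A = \<beta> \<cdot>\<^sub>m 1\<^sub>m n"
    and fdim: "\<forall>v<Q1. \<forall>u<Q0. dim_vec (f v u) = r"
    and gdim: "\<forall>u<Q0. \<forall>v<Q1. dim_vec (g u v) = r"
    and cond: "\<forall>u<Q0. \<forall>u'<Q0. \<forall>t<r. \<forall>t'<r.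
        (\<Sum>v<Q1. f v u $ t * g u' v $ t') = (if u = u' \<and> t = t' then c else 0)"
  shows "blockmat Q0 Q1 n m1 (\<lambda>j k. cconv A' (g j k))
          * transpose_mat (blockmat Q0 Q1 n m1 (\<lambda>k j. cconv A (f j k)))
        = (\<beta> * c * real r) \<cdot>\<^sub>m 1\<^sub>m (Q0 * n)"
proof (rule eq_matI)
  show "dim_row (blockmat Q0 Q1 n m1 (\<lambda>j k. cconv A' (g j k))
          * transpose_mat (blockmat Q0 Q1 n m1 (\<lambda>k j. cconv A (f j k)))) = dim_row ((\<beta> * c * real r) \<cdot>\<^sub>m 1\<^sub>m (Q0 * n))"
    by (simp add: blockmat_def)
  show "dim_col (blockmat Q0 Q1 n m1 (\<lambda>j k. cconv A' (g j k))
          * transpose_mat (blockmat Q0 Q1 n m1 (\<lambda>k j. cconv A (f j k)))) = dim_col ((\<beta> * c * real r) \<cdot>\<^sub>m 1\<^sub>m (Q0 * n))"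
    by (simp add: blockmat_def)
  fix i i' assume "i < dim_row ((\<beta> * c * real r) \<cdot>\<^sub>m 1\<^sub>m (Q0 * n))" "i' < dim_col ((\<beta> * c * real r) \<cdot>\<^sub>m 1\<^sub>m (Q0 * n))"
  then have i: "i < Q0 * n" and i': "i' < Q0 * n" by auto
  define j where "j = i div n"
  define k' where "k' = i' div n"
  define x where "x = i mod n"
  define y where "y = i' mod n"
  have n0: "0 < n" using i by (cases n) auto
  have j: "j < Q0" using i unfolding j_def by (simp add: less_mult_imp_div_less)
  have k': "k' < Q0" using i' unfolding k'_def by (simp add: less_mult_imp_div_less)
  have x: "x < n" and y: "y < n" using n0 unfolding x_def y_def by auto
  have cA: "cconv A h = circ n h * A" for h using cconv_circ[of A h] A by simp
  have cA': "cconv A' h = circ n h * A'" for h using cconv_circ[of A' h] A' by simp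
  have "(blockmat Q0 Q1 n m1 (\<lambda>j k. cconv A' (g j k))
          * transpose_mat (blockmat Q0 Q1 n m1 (\<lambda>k j. cconv A (f j k)))) $$ (i,i')
     = (\<Sum>v<Q1. (cconv A' (g j v) * transpose_mat (cconv A (f v k'))) $$ (x, y))"
    unfolding j_def k'_def x_def y_def
    by (rule blockmat_mult_T_entry[OF i i']) (auto simp: cA cA' intro!: mult_carrier_mat[OF circ_carrier] A A')
  also have "\<dots> = (\<Sum>v<Q1. \<beta> * (\<Sum>a<n. pad (g j v) ((x + n - a) mod n) * pad (f v k') ((y + n - a) mod n)))"
  proof (intro sum.cong refl)
    fix v
    have "cconv A' (g j v) * transpose_mat (cconv A (f v k')) = \<beta> \<cdot>\<^sub>m (circ n (g j v) * transpose_mat (circ n (f v k')))"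
      unfolding cA cA' by (rule circ_prod[OF A A' AA]) auto
    then show "(cconv A' (g j v) * transpose_mat (cconv A (f v k'))) $$ (x, y)
      = \<beta> * (\<Sum>a<n. pad (g j v) ((x + n - a) mod n) * pad (f v k') ((y + n - a) mod n))"
    proof -
      have "(\<beta> \<cdot>\<^sub>m (circ n (g j v) * transpose_mat (circ n (f v k')))) $$ (x,y)
          = \<beta> * (circ n (g j v) * transpose_mat (circ n (f v k'))) $$ (x,y)"
        by (rule index_smult_mat) (use x y in simp_all)
      then show ?thesis using \<open>cconv A' (g j v) * transpose_mat (cconv A (f v k')) = _\<close> circ_circ_T_entry[OF x y] by simp
    qed
  qed
  also have "\<dots> = \<beta> * (\<Sum>a<n. \<Sum>v<Q1. pad (g j v) ((x + n - a) mod n) * pad (f v k') ((y + n - a) mod n))"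
    by (simp add: sum_distrib_left sum.swap[of _ "{..<n}"])
  also have "\<dots> = \<beta> * (\<Sum>a<n. (if k' = j \<and> (y + n - a) mod n = (x + n - a) mod n \<and> (y + n - a) mod n < r then c else 0))"
  proof -
    have "\<forall>t<r. \<forall>t'<r. (\<Sum>v<Q1. f v k' $ t * g j v $ t') = (if k' = j \<and> t = t' then c else 0)"
      using cond j k' by auto
    then have h: "(\<Sum>v<Q1. pad (g j v) t' * pad (f v k') t) = (if k' = j \<and> t = t' \<and> t < r then c else 0)" for t t'
      using fdim gdim j k' by (intro inner_sum) auto
    show ?thesis by (simp only: h)
  qed
  also have "\<dots> = (if k' = j \<and> x = y then \<beta> * c * real r else 0)"
  proof (cases "x = y")
    case True
    have "(\<Sum>a<n. (if k' = j \<and> (y + n - a) mod n = (x + n - a) mod n \<and> (y + n - a) mod n < r then c else 0))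
        = (\<Sum>a<n. (\<lambda>t. if k' = j \<and> t < r then c else 0) ((x + n - a) mod n))"
      using True by simp
    also have "\<dots> = (\<Sum>t<n. (if k' = j \<and> t < r then c else 0))"
      by (rule reindex_circ[OF x])
    also have "\<dots> = (if k' = j then c * real r else 0)"
    proof (cases "k' = j")
      case True
      have "(\<Sum>t<n. (if t < r then c else 0)) = sum (\<lambda>t. c) {t\<in>{..<n}. t < r}"
        by (rule sum.inter_filter[symmetric]) simp
      also have "{t\<in>{..<n}. t < r} = {..<r}" using rn by auto
      finally show ?thesis using True by simp
    qed simp
    finally show ?thesis using True by simp
  next
    case False
    have "(y + n - a) mod n \<noteq> (x + n - a) mod n" if "a < n" for a
      using False x y that by (auto simp: modform split: if_splits)
    then show ?thesis using False by simp
  qed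
  also have "\<dots> = ((\<beta> * c * real r) \<cdot>\<^sub>m 1\<^sub>m (Q0 * n)) $$ (i, i')"
  proof -
    have "(k' = j \<and> x = y) = (i = i')"
      unfolding j_def k'_def x_def y_def by (metis div_mult_mod_eq)
    then show ?thesis using i i' by simp
  qed
  finally show "(blockmat Q0 Q1 n m1 (\<lambda>j k. cconv A' (g j k))
          * transpose_mat (blockmat Q0 Q1 n m1 (\<lambda>k j. cconv A (f j k)))) $$ (i,i') = ((\<beta> * c * real r) \<cdot>\<^sub>m 1\<^sub>m (Q0 * n)) $$ (i, i')" .
qed


lemma one_smult_mat': "(1::real) \<cdot>\<^sub>m A = A"
  by (rule eq_matI) auto

lemma sandwich:
  fixes X Y D E :: "real mat"
  assumes X: "X \<in> carrier_mat N a" and Y: "Y \<in> carrier_mat N' a"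
    and D: "D \<in> carrier_mat a b" and E: "E \<in> carrier_mat a b"
    and DE: "D * transpose_mat E = s \<cdot>\<^sub>m 1\<^sub>m a"
  shows "(X * D) * transpose_mat (Y * E) = s \<cdot>\<^sub>m (X * transpose_mat Y)"
proof -
  have "transpose_mat (Y * E) = transpose_mat E * transpose_mat Y"
    using Y E by (rule transpose_mult)
  moreover have c: "transpose_mat E * transpose_mat Y \<in> carrier_mat b N'" using E Y by simp
  ultimately have "(X * D) * transpose_mat (Y * E) = X * (D * (transpose_mat E * transpose_mat Y))"
    using assoc_mult_mat[OF X D c] by simp
  also have "D * (transpose_mat E * transpose_mat Y) = (D * transpose_mat E) * transpose_mat Y"
    using D E Y by simp
  also have "\<dots> = s \<cdot>\<^sub>m transpose_mat Y"
    unfolding DE using Y by (simp add: mult_smult_assoc_mat[of _ a a])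
  also have "X * (s \<cdot>\<^sub>m transpose_mat Y) = s \<cdot>\<^sub>m (X * transpose_mat Y)"
    using X Y by (simp add: mult_smult_distrib[of _ N a])
  finally show ?thesis .
qed

lemma vec_step:
  fixes D E :: "real mat" and w :: "real vec"
  assumes D: "D \<in> carrier_mat a b" and E: "E \<in> carrier_mat a b" and w: "w \<in> carrier_vec a"
    and DE: "D * transpose_mat E = s \<cdot>\<^sub>m 1\<^sub>m a"
  shows "D *\<^sub>v (transpose_mat E *\<^sub>v w) = s \<cdot>\<^sub>v w"
proof -
  have "D *\<^sub>v (transpose_mat E *\<^sub>v w) = (D * transpose_mat E) *\<^sub>v w"
    using D E w by simp
  also have "\<dots> = s \<cdot>\<^sub>v w" unfolding DE
  proof (rule eq_vecI)
    fix i assume "i < dim_vec (s \<cdot>\<^sub>v w)"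
    then have i: "i < a" using w by simp
    have "((s \<cdot>\<^sub>m 1\<^sub>m a) *\<^sub>v w) $ i = (\<Sum>k<a. s * (if k = i then 1 else 0) * w $ k)"
      using i w by (simp add: scalar_prod_def atLeast0LessThan)
    also have "\<dots> = (\<Sum>k<a. if k = i then s * w $ i else 0)"
      by (rule sum.cong) auto
    also have "\<dots> = s * w $ i" using i by simp
    finally show "((s \<cdot>\<^sub>m 1\<^sub>m a) *\<^sub>v w) $ i = (s \<cdot>\<^sub>v w) $ i" using i w by simp
  qed (use w in simp)
  finally show ?thesis .
qed

lemma sum_split_add:
  fixes h :: "nat \<Rightarrow> real"
  shows "(\<Sum>c<a+b. h c) = (\<Sum>c<a. h c) + (\<Sum>c<b. h (a + c))"
proof -
  have "(\<Sum>c<a+b. h c) = (\<Sum>c\<in>{0..<a}. h c) + (\<Sum>c\<in>{a..<a+b}. h c)"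
    by (simp add: sum.atLeastLessThan_concat atLeast0LessThan[symmetric])
  also have "(\<Sum>c\<in>{a..<a+b}. h c) = (\<Sum>c\<in>{0+a..<b+a}. h c)" by (simp add: add.commute)
  also have "\<dots> = (\<Sum>c\<in>{0..<b}. h (c + a))" by (rule sum.shift_bounds_nat_ivl)
  finally show ?thesis by (simp add: atLeast0LessThan add.commute)
qed

lemma hcat_dims[simp]: "dim_row (hcat A B) = dim_row A" "dim_col (hcat A B) = dim_col A + dim_col B"
  by (simp_all add: hcat_def)

lemma hcat_mult_T:
  assumes "dim_row B = dim_row A" "dim_row B' = dim_row A'" "dim_col A' = dim_col A" "dim_col B' = dim_col B"
  shows "hcat A B * transpose_mat (hcat A' B') = A * transpose_mat A' + B * transpose_mat B'"
proof (rule eq_matI)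
  fix i j assume ij: "i < dim_row (A * transpose_mat A' + B * transpose_mat B')"
     "j < dim_col (A * transpose_mat A' + B * transpose_mat B')"
  then have i: "i < dim_row A" and j: "j < dim_row A'" using assms by auto
  have "(hcat A B * transpose_mat (hcat A' B')) $$ (i,j)
     = (\<Sum>c<dim_col A + dim_col B. (if c < dim_col A then A $$ (i,c) else B $$ (i, c - dim_col A))
          * (if c < dim_col A then A' $$ (j,c) else B' $$ (j, c - dim_col A)))"
    using i j assms by (simp add: hcat_def scalar_prod_def atLeast0LessThan) (rule sum.cong; simp add: assms(3))
  also have "\<dots> = (\<Sum>c<dim_col A. A $$ (i,c) * A' $$ (j,c)) + (\<Sum>c<dim_col B. B $$ (i,c) * B' $$ (j,c))"
    by (simp add: sum_split_add)
  also have "\<dots> = (A * transpose_mat A' + B * transpose_mat B') $$ (i,j)"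
    using i j assms by (simp add: scalar_prod_def atLeast0LessThan)
  finally show "(hcat A B * transpose_mat (hcat A' B')) $$ (i,j) = (A * transpose_mat A' + B * transpose_mat B') $$ (i,j)" .
qed (use assms in auto)

lemma foldl_hcat_row: "dim_row (foldl hcat A (map h xs)) = dim_row A"
  by (induct xs arbitrary: A) auto

lemma foldl_hcat_col: "(\<forall>l\<in>set xs. dim_col (h l) = dim_col (h' l)) \<Longrightarrow> dim_col A = dim_col A'
  \<Longrightarrow> dim_col (foldl hcat A (map h xs)) = dim_col (foldl hcat A' (map h' xs))"
  by (induct xs arbitrary: A A') auto

lemma foldl_hcat_mult_T:
  assumes "\<forall>l\<in>set xs. dim_row (h l) = dim_row A \<and> dim_row (h' l) = dim_row A' \<and> dim_col (h l) = dim_col (h' l)"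
    and "dim_col A = dim_col A'"
  shows "foldl hcat A (map h xs) * transpose_mat (foldl hcat A' (map h' xs))
     = foldl (\<lambda>acc l. acc + h l * transpose_mat (h' l)) (A * transpose_mat A') xs"
  using assms
proof (induct xs arbitrary: A A')
  case Nil
  then show ?case by simp
next
  case (Cons x xs)
  have "foldl hcat A (map h (x # xs)) * transpose_mat (foldl hcat A' (map h' (x # xs)))
     = foldl hcat (hcat A (h x)) (map h xs) * transpose_mat (foldl hcat (hcat A' (h' x)) (map h' xs))" by simp
  also have "\<dots> = foldl (\<lambda>acc l. acc + h l * transpose_mat (h' l)) (hcat A (h x) * transpose_mat (hcat A' (h' x))) xs"
    by (rule Cons.hyps) (use Cons.prems in auto)
  also have "hcat A (h x) * transpose_mat (hcat A' (h' x)) = A * transpose_mat A' + h x * transpose_mat (h' x)"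
    by (rule hcat_mult_T) (use Cons.prems in auto)
  finally show ?case by simp
qed

lemma frame_expand_eq:
  assumes "dim_vec x = dim_row B" "dim_col Bt = dim_col B"
  shows "frame_expand B Bt x = (Bt * transpose_mat B) *\<^sub>v x"
proof (rule eq_vecI)
  fix a assume "a < dim_vec ((Bt * transpose_mat B) *\<^sub>v x)"
  then have a: "a < dim_row Bt" by simp
  have "frame_expand B Bt x $ a = (\<Sum>i<dim_col B. (\<Sum>b<dim_row B. B $$ (b,i) * x $ b) * Bt $$ (a,i))"
    using a assms by (simp add: frame_expand_def scalar_prod_def atLeast0LessThan)
  also have "\<dots> = (\<Sum>b<dim_row B. (\<Sum>i<dim_col B. Bt $$ (a,i) * B $$ (b,i)) * x $ b)"
    by (simp add: sum_distrib_left sum_distrib_right sum.swap[of _ "{..<dim_col B}"] ac_simps)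
  also have "\<dots> = ((Bt * transpose_mat B) *\<^sub>v x) $ a"
    using a assms by (simp add: scalar_prod_def atLeast0LessThan)
  finally show "frame_expand B Bt x $ a = ((Bt * transpose_mat B) *\<^sub>v x) $ a" .
qed (simp add: frame_expand_def)

lemma chain_row[simp]: "dim_row (chain M n k) = n"
  by (induct k) auto

lemma chain_carrier:
  assumes "n = q 0 * m 0" "\<forall>l. 1 \<le> l \<and> l \<le> k \<longrightarrow> M l \<in> carrier_mat (q (l-1) * m (l-1)) (q l * m l)"
  shows "chain M n k \<in> carrier_mat n (q k * m k)"
  using assms(2)
proof (induct k)
  case 0
  then show ?case using assms(1) by simp
next
  case (Suc k)
  then have "chain M n k \<in> carrier_mat n (q k * m k)" by auto
  moreover have "M (Suc k) \<in> carrier_mat (q k * m k) (q (Suc k) * m (Suc k))" using Suc.prems by auto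
  ultimately show ?case by simp
qed

lemma filt_cond:
  assumes H: "filtPsi r q \<psi> l * transpose_mat (filtPsit r q \<psi>t l) = c \<cdot>\<^sub>m 1\<^sub>m (r * q (l-1))"
  shows "\<forall>u<q (l-1). \<forall>u'<q (l-1). \<forall>t<r. \<forall>t'<r.
        (\<Sum>v<q l. \<psi> l v u $ t * \<psi>t l u' v $ t') = (if u = u' \<and> t = t' then c else 0)"
proof (intro allI impI)
  fix u u' t t' assume u: "u < q (l-1)" and u': "u' < q (l-1)" and t: "t < r" and t': "t' < r"
  have b1: "u*r+t < r * q (l-1)"
  proof -
    have "u*r+t < (u+1)*r" using t by simp
    also have "\<dots> \<le> q (l-1) * r" using u by (intro mult_le_mono1) simp
    finally show ?thesis by (simp add: mult.commute)
  qed
  have b2: "u'*r+t' < r * q (l-1)"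
  proof -
    have "u'*r+t' < (u'+1)*r" using t' by simp
    also have "\<dots> \<le> q (l-1) * r" using u' by (intro mult_le_mono1) simp
    finally show ?thesis by (simp add: mult.commute)
  qed
  have d1: "(u*r+t) div r = u" "(u*r+t) mod r = t" using t by auto
  have d2: "(u'*r+t') div r = u'" "(u'*r+t') mod r = t'" using t' by auto
  have "(filtPsi r q \<psi> l * transpose_mat (filtPsit r q \<psi>t l)) $$ (u*r+t, u'*r+t')
      = (\<Sum>v<q l. \<psi> l v u $ t * \<psi>t l u' v $ t')"
    using b1 b2 t t' by (simp add: filtPsi_def filtPsit_def scalar_prod_def atLeast0LessThan d1 d2)
  moreover have "(c \<cdot>\<^sub>m 1\<^sub>m (r * q (l-1))) $$ (u*r+t, u'*r+t') = (if u = u' \<and> t = t' then c else 0)"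
  proof -
    have "(u*r+t = u'*r+t') = (u = u' \<and> t = t')" using d1 d2 by metis
    then show ?thesis using b1 b2 by simp
  qed
  ultimately show "(\<Sum>v<q l. \<psi> l v u $ t * \<psi>t l u' v $ t') = (if u = u' \<and> t = t' then c else 0)"
    using H by simp
qed


lemma layers:
  fixes \<Phi> \<Phi>t :: "nat \<Rightarrow> real mat" and \<psi> \<psi>t :: "nat \<Rightarrow> nat \<Rightarrow> nat \<Rightarrow> real vec"
  assumes l: "1 \<le> l" "l \<le> \<kappa>"
    and r_le: "\<forall>l\<le>\<kappa>. r \<le> m l"
    and Phi_dim: "\<forall>l\<in>{1..\<kappa>}. \<Phi> l \<in> carrier_mat (m (l-1)) (m l)"
    and Phit_dim: "\<forall>l\<in>{1..\<kappa>}. \<Phi>t l \<in> carrier_mat (m (l-1)) (m l)"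
    and psi_dim: "\<forall>l\<in>{1..\<kappa>}. \<forall>j<q l. \<forall>k<q (l-1). dim_vec (\<psi> l j k) = r"
    and psit_dim: "\<forall>l\<in>{1..\<kappa>}. \<forall>j<q (l-1). \<forall>k<q l. dim_vec (\<psi>t l j k) = r"
    and PP: "\<Phi>t l * transpose_mat (\<Phi> l) = \<alpha> \<cdot>\<^sub>m 1\<^sub>m (m (l-1))"
    and FF: "filtPsi r q \<psi> l * transpose_mat (filtPsit r q \<psi>t l) = c \<cdot>\<^sub>m 1\<^sub>m (r * q (l-1))"
  shows "decD m q \<Phi>t \<psi>t l * transpose_mat (encE m q \<Phi> \<psi> l) = (\<alpha> * c * real r) \<cdot>\<^sub>m 1\<^sub>m (q (l-1) * m (l-1))"
    and "skipSt m q \<psi>t l * transpose_mat (skipS m q \<psi> l) = (1 * c * real r) \<cdot>\<^sub>m 1\<^sub>m (q (l-1) * m (l-1))"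
proof -
  have lin: "l \<in> {1..\<kappa>}" using l by simp
  have rn: "r \<le> m (l-1)" using r_le l by simp
  have fdim: "\<forall>v<q l. \<forall>u<q (l-1). dim_vec (\<psi> l v u) = r" using psi_dim lin by blast
  have gdim: "\<forall>u<q (l-1). \<forall>v<q l. dim_vec (\<psi>t l u v) = r" using psit_dim lin by blast
  have cond: "\<forall>u<q (l-1). \<forall>u'<q (l-1). \<forall>t<r. \<forall>t'<r.
        (\<Sum>v<q l. \<psi> l v u $ t * \<psi>t l u' v $ t') = (if u = u' \<and> t = t' then c else 0)"
    by (rule filt_cond[OF FF])
  show "decD m q \<Phi>t \<psi>t l * transpose_mat (encE m q \<Phi> \<psi> l) = (\<alpha> * c * real r) \<cdot>\<^sub>m 1\<^sub>m (q (l-1) * m (l-1))"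
    unfolding decD_def encE_def
    by (rule layer[OF rn _ _ PP fdim gdim cond]) (use Phi_dim Phit_dim lin in auto)
  have II: "1\<^sub>m (m (l-1)) * transpose_mat (1\<^sub>m (m (l-1))) = (1::real) \<cdot>\<^sub>m 1\<^sub>m (m (l-1))"
    by (simp add: one_smult_mat')
  show "skipSt m q \<psi>t l * transpose_mat (skipS m q \<psi> l) = (1 * c * real r) \<cdot>\<^sub>m 1\<^sub>m (q (l-1) * m (l-1))"
    unfolding skipSt_def skipS_def
    by (rule layer[OF rn _ _ II fdim gdim cond]) auto
qed

theorem proposition3:
  fixes \<kappa> r :: nat and \<alpha> :: real and m q :: "nat \<Rightarrow> nat"
    and \<Phi> \<Phi>t :: "nat \<Rightarrow> real mat"
    and \<psi> \<psi>t :: "nat \<Rightarrow> nat \<Rightarrow> nat \<Rightarrow> real vec"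
  assumes kappa: "\<kappa> \<ge> 1"
    and r_pos: "r \<ge> 1"
    and r_le: "\<forall>l\<le>\<kappa>. r \<le> m l"
    and alpha: "\<alpha> > 0"
    and Phi_dim: "\<forall>l\<in>{1..\<kappa>}. \<Phi> l \<in> carrier_mat (m (l-1)) (m l)"
    and Phit_dim: "\<forall>l\<in>{1..\<kappa>}. \<Phi>t l \<in> carrier_mat (m (l-1)) (m l)"
    and psi_dim: "\<forall>l\<in>{1..\<kappa>}. \<forall>j<q l. \<forall>k<q (l-1). dim_vec (\<psi> l j k) = r"
    and psit_dim: "\<forall>l\<in>{1..\<kappa>}. \<forall>j<q (l-1). \<forall>k<q l. dim_vec (\<psi>t l j k) = r"
  shows
    "((\<forall>l\<in>{1..\<kappa>}. \<Phi>t l * transpose_mat (\<Phi> l) = \<alpha> \<cdot>\<^sub>m 1\<^sub>m (m (l-1))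
          \<and> filtPsi r q \<psi> l * transpose_mat (filtPsit r q \<psi>t l)
              = (1 / (real r * \<alpha>)) \<cdot>\<^sub>m 1\<^sub>m (r * q (l-1)))
      \<longrightarrow> (let B = chain (encE m q \<Phi> \<psi>) (m 0 * q 0) \<kappa>;
               Bt = chain (decD m q \<Phi>t \<psi>t) (m 0 * q 0) \<kappa>
           in Bt * transpose_mat B = 1\<^sub>m (m 0 * q 0)
              \<and> (\<forall>x\<in>carrier_vec (m 0 * q 0). x = frame_expand B Bt x)
              \<and> (\<forall>x\<in>carrier_vec (m 0 * q 0).
                   net_noskip (encE m q \<Phi> \<psi>) (decD m q \<Phi>t \<psi>t) \<kappa> x
                     = (Bt * transpose_mat B) *\<^sub>v x)))
   \<and> ((\<forall>l\<in>{1..\<kappa>}. \<Phi>t l * transpose_mat (\<Phi> l) = \<alpha> \<cdot>\<^sub>m 1\<^sub>m (m (l-1))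
          \<and> filtPsi r q \<psi> l * transpose_mat (filtPsit r q \<psi>t l)
              = (1 / (real r * (\<alpha> + 1))) \<cdot>\<^sub>m 1\<^sub>m (r * q (l-1)))
      \<longrightarrow> (let B = skip_frame (encE m q \<Phi> \<psi>) (skipS m q \<psi>) (m 0 * q 0) \<kappa>;
               Bt = skip_frame (decD m q \<Phi>t \<psi>t) (skipSt m q \<psi>t) (m 0 * q 0) \<kappa>
           in (\<forall>x\<in>carrier_vec (m 0 * q 0).
                 net_skip (encE m q \<Phi> \<psi>) (decD m q \<Phi>t \<psi>t) (skipS m q \<psi>) (skipSt m q \<psi>t) \<kappa> x
                   = (Bt * transpose_mat B) *\<^sub>v x)
              \<and> Bt * transpose_mat B = 1\<^sub>m (m 0 * q 0)
              \<and> (\<forall>x\<in>carrier_vec (m 0 * q 0). x = frame_expand B Bt x)))"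
proof -
  let ?N = "m 0 * q 0"
  let ?E = "encE m q \<Phi> \<psi>" and ?D = "decD m q \<Phi>t \<psi>t" and ?S = "skipS m q \<psi>" and ?St = "skipSt m q \<psi>t"
  have N: "?N = q 0 * m 0" by simp
  have Ec: "?E l \<in> carrier_mat (q (l-1) * m (l-1)) (q l * m l)" for l by (simp add: encE_def blockmat_def)
  have Dc: "?D l \<in> carrier_mat (q (l-1) * m (l-1)) (q l * m l)" for l by (simp add: decD_def blockmat_def)
  have Sc: "?S l \<in> carrier_mat (q (l-1) * m (l-1)) (q l * m (l-1))" for l by (simp add: skipS_def blockmat_def)
  have Stc: "?St l \<in> carrier_mat (q (l-1) * m (l-1)) (q l * m (l-1))" for l by (simp add: skipSt_def blockmat_def)
  have CEc: "chain ?E ?N k \<in> carrier_mat ?N (q k * m k)" for k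
    by (rule chain_carrier[where q=q and m=m, OF N]) (use Ec in auto)
  have CDc: "chain ?D ?N k \<in> carrier_mat ?N (q k * m k)" for k
    by (rule chain_carrier[where q=q and m=m, OF N]) (use Dc in auto)
  have encc: "enc ?E x k \<in> carrier_vec (q k * m k)" if x: "x \<in> carrier_vec ?N" for x k
  proof (induct k)
    case 0 then show ?case using x by (simp add: mult.commute)
  next
    case (Suc k) then show ?case using Ec[of "Suc k"] by simp
  qed
  have rpos: "real r > 0" using r_pos by simp
  have P0: "chain ?D ?N 0 * transpose_mat (chain ?E ?N 0) = 1\<^sub>m ?N" by simp
  show ?thesis
  proof (intro conjI impI)
    assume H: "\<forall>l\<in>{1..\<kappa>}. \<Phi>t l * transpose_mat (\<Phi> l) = \<alpha> \<cdot>\<^sub>m 1\<^sub>m (m (l-1))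
          \<and> filtPsi r q \<psi> l * transpose_mat (filtPsit r q \<psi>t l)
              = (1 / (real r * \<alpha>)) \<cdot>\<^sub>m 1\<^sub>m (r * q (l-1))"
    have DE: "?D l * transpose_mat (?E l) = 1 \<cdot>\<^sub>m 1\<^sub>m (q (l-1) * m (l-1))" if "1 \<le> l" "l \<le> \<kappa>" for l
    proof -
      have "?D l * transpose_mat (?E l) = (\<alpha> * (1 / (real r * \<alpha>)) * real r) \<cdot>\<^sub>m 1\<^sub>m (q (l-1) * m (l-1))"
        using H that by (intro layers(1)[OF that r_le Phi_dim Phit_dim psi_dim psit_dim]) auto
      moreover have "\<alpha> * (1 / (real r * \<alpha>)) * real r = 1" using alpha rpos by (simp add: field_simps)
      ultimately show ?thesis by simp
    qed
    have P: "chain ?D ?N k * transpose_mat (chain ?E ?N k) = 1\<^sub>m ?N" if "k \<le> \<kappa>" for k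
      using that
    proof (induct k)
      case 0 then show ?case by simp
    next
      case (Suc k)
      have "chain ?D ?N (Suc k) * transpose_mat (chain ?E ?N (Suc k))
          = (chain ?D ?N k * ?D (Suc k)) * transpose_mat (chain ?E ?N k * ?E (Suc k))" by simp
      also have "\<dots> = 1 \<cdot>\<^sub>m (chain ?D ?N k * transpose_mat (chain ?E ?N k))"
        by (rule sandwich[OF CDc CEc]) (use Dc[of "Suc k"] Ec[of "Suc k"] DE[of "Suc k"] Suc.prems in auto)
      finally show ?case using Suc by (simp add: one_smult_mat')
    qed
    have BB: "chain ?D ?N \<kappa> * transpose_mat (chain ?E ?N \<kappa>) = 1\<^sub>m ?N" using P by simp
    have dec_enc: "dec ?D k (enc ?E x k) = x" if x: "x \<in> carrier_vec ?N" and "k \<le> \<kappa>" for x k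
      using that(2)
    proof (induct k)
      case 0 then show ?case by simp
    next
      case (Suc k)
      have "?D (Suc k) *\<^sub>v (transpose_mat (?E (Suc k)) *\<^sub>v enc ?E x k) = 1 \<cdot>\<^sub>v enc ?E x k"
        by (rule vec_step) (use Dc[of "Suc k"] Ec[of "Suc k"] DE[of "Suc k"] Suc.prems encc[OF x, of k] in auto)
      then show ?case using Suc by simp
    qed
    show "let B = chain ?E ?N \<kappa>; Bt = chain ?D ?N \<kappa>
           in Bt * transpose_mat B = 1\<^sub>m ?N
              \<and> (\<forall>x\<in>carrier_vec ?N. x = frame_expand B Bt x)
              \<and> (\<forall>x\<in>carrier_vec ?N. net_noskip ?E ?D \<kappa> x = (Bt * transpose_mat B) *\<^sub>v x)"
      unfolding Let_def
    proof (intro conjI ballI)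
      show "chain ?D ?N \<kappa> * transpose_mat (chain ?E ?N \<kappa>) = 1\<^sub>m ?N" by (rule BB)
    next
      fix x :: "real vec" assume x: "x \<in> carrier_vec ?N"
      have "frame_expand (chain ?E ?N \<kappa>) (chain ?D ?N \<kappa>) x = (chain ?D ?N \<kappa> * transpose_mat (chain ?E ?N \<kappa>)) *\<^sub>v x"
        by (rule frame_expand_eq) (use x CEc[of \<kappa>] CDc[of \<kappa>] in auto)
      then show "x = frame_expand (chain ?E ?N \<kappa>) (chain ?D ?N \<kappa>) x" using BB x by simp
    next
      fix x :: "real vec" assume x: "x \<in> carrier_vec ?N"
      show "net_noskip ?E ?D \<kappa> x = (chain ?D ?N \<kappa> * transpose_mat (chain ?E ?N \<kappa>)) *\<^sub>v x"
        using BB x dec_enc[OF x] by (simp add: net_noskip_def)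
    qed
  next
    assume H: "\<forall>l\<in>{1..\<kappa>}. \<Phi>t l * transpose_mat (\<Phi> l) = \<alpha> \<cdot>\<^sub>m 1\<^sub>m (m (l-1))
          \<and> filtPsi r q \<psi> l * transpose_mat (filtPsit r q \<psi>t l)
              = (1 / (real r * (\<alpha> + 1))) \<cdot>\<^sub>m 1\<^sub>m (r * q (l-1))"
    define a where "a = \<alpha> / (\<alpha> + 1)"
    define b where "b = 1 / (\<alpha> + 1)"
    have ab: "a + b = 1" unfolding a_def b_def using alpha by (simp add: field_simps)
    have DE: "?D l * transpose_mat (?E l) = a \<cdot>\<^sub>m 1\<^sub>m (q (l-1) * m (l-1))"
      and SS: "?St l * transpose_mat (?S l) = b \<cdot>\<^sub>m 1\<^sub>m (q (l-1) * m (l-1))" if "1 \<le> l" "l \<le> \<kappa>" for l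
    proof -
      have "\<alpha> * (1 / (real r * (\<alpha> + 1))) * real r = a" unfolding a_def using alpha rpos by (simp add: divide_simps)
      then show "?D l * transpose_mat (?E l) = a \<cdot>\<^sub>m 1\<^sub>m (q (l-1) * m (l-1))"
        using H that layers(1)[OF that r_le Phi_dim Phit_dim psi_dim psit_dim, of \<alpha> "1 / (real r * (\<alpha> + 1))"] by auto
      have "1 * (1 / (real r * (\<alpha> + 1))) * real r = b" unfolding b_def using alpha rpos by (simp add: divide_simps)
      then show "?St l * transpose_mat (?S l) = b \<cdot>\<^sub>m 1\<^sub>m (q (l-1) * m (l-1))"
        using H that layers(2)[OF that r_le Phi_dim Phit_dim psi_dim psit_dim, of \<alpha> "1 / (real r * (\<alpha> + 1))"] by auto
    qed
    define f where "f = (\<lambda>acc l. acc + (chain ?D ?N (l-1) * ?St l) * transpose_mat (chain ?E ?N (l-1) * ?S l))"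
    have tele: "foldl f (chain ?D ?N k * transpose_mat (chain ?E ?N k)) (rev [1..<Suc k]) = 1\<^sub>m ?N" if "k \<le> \<kappa>" for k
      using that
    proof (induct k)
      case 0 then show ?case by simp
    next
      case (Suc k)
      let ?P = "chain ?D ?N k * transpose_mat (chain ?E ?N k)"
      have Pc: "?P \<in> carrier_mat ?N ?N" using CDc[of k] CEc[of k] by simp
      have "chain ?D ?N (Suc k) * transpose_mat (chain ?E ?N (Suc k))
          = (chain ?D ?N k * ?D (Suc k)) * transpose_mat (chain ?E ?N k * ?E (Suc k))" by simp
      also have "\<dots> = a \<cdot>\<^sub>m ?P"
        by (rule sandwich[OF CDc CEc]) (use Dc[of "Suc k"] Ec[of "Suc k"] DE[of "Suc k"] Suc.prems in auto)
      finally have e1: "chain ?D ?N (Suc k) * transpose_mat (chain ?E ?N (Suc k)) = a \<cdot>\<^sub>m ?P" .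
      have e2: "(chain ?D ?N k * ?St (Suc k)) * transpose_mat (chain ?E ?N k * ?S (Suc k)) = b \<cdot>\<^sub>m ?P"
        by (rule sandwich[OF CDc CEc]) (use Stc[of "Suc k"] Sc[of "Suc k"] SS[of "Suc k"] Suc.prems in auto)
      have "f (chain ?D ?N (Suc k) * transpose_mat (chain ?E ?N (Suc k))) (Suc k) = a \<cdot>\<^sub>m ?P + b \<cdot>\<^sub>m ?P"
        unfolding f_def e1 using e2 by simp
      also have "\<dots> = ?P"
        using add_smult_distrib_right_mat[OF Pc, of a b] ab by (simp add: one_smult_mat')
      finally have "f (chain ?D ?N (Suc k) * transpose_mat (chain ?E ?N (Suc k))) (Suc k) = ?P" .
      then show ?case using Suc by simp
    qed
    have BB: "skip_frame ?D ?St ?N \<kappa> * transpose_mat (skip_frame ?E ?S ?N \<kappa>) = 1\<^sub>m ?N"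
    proof -
      have "skip_frame ?D ?St ?N \<kappa> * transpose_mat (skip_frame ?E ?S ?N \<kappa>)
         = foldl f (chain ?D ?N \<kappa> * transpose_mat (chain ?E ?N \<kappa>)) (rev [1..<Suc \<kappa>])"
        unfolding skip_frame_def f_def
        by (rule foldl_hcat_mult_T) (use CDc[of \<kappa>] CEc[of \<kappa>] in \<open>auto simp: skipS_def skipSt_def blockmat_def\<close>)
      then show ?thesis using tele by simp
    qed
    let ?chi = "\<lambda>x l. transpose_mat (?S l) *\<^sub>v enc ?E x (l-1)"
    have dec_enc: "dec_skip ?D ?St (?chi x) k (enc ?E x k) = x" if x: "x \<in> carrier_vec ?N" and "k \<le> \<kappa>" for x k
      using that(2)
    proof (induct k)
      case 0 then show ?case by simp
    next
      case (Suc k)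
      have w: "enc ?E x k \<in> carrier_vec (q k * m k)" using encc[OF x] .
      have 1: "?D (Suc k) *\<^sub>v (transpose_mat (?E (Suc k)) *\<^sub>v enc ?E x k) = a \<cdot>\<^sub>v enc ?E x k"
        by (rule vec_step) (use Dc[of "Suc k"] Ec[of "Suc k"] DE[of "Suc k"] Suc.prems w in auto)
      have 2: "?St (Suc k) *\<^sub>v (transpose_mat (?S (Suc k)) *\<^sub>v enc ?E x k) = b \<cdot>\<^sub>v enc ?E x k"
        by (rule vec_step) (use Stc[of "Suc k"] Sc[of "Suc k"] SS[of "Suc k"] Suc.prems w in auto)
      have "a \<cdot>\<^sub>v enc ?E x k + b \<cdot>\<^sub>v enc ?E x k = enc ?E x k"
        using add_smult_distrib_vec[of a b "enc ?E x k"] ab by simp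
      then show ?case using Suc 1 2 by simp
    qed
    have FB: "frame_expand (skip_frame ?E ?S ?N \<kappa>) (skip_frame ?D ?St ?N \<kappa>) x
        = (skip_frame ?D ?St ?N \<kappa> * transpose_mat (skip_frame ?E ?S ?N \<kappa>)) *\<^sub>v x"
      if x: "x \<in> carrier_vec ?N" for x
    proof (rule frame_expand_eq)
      show "dim_vec x = dim_row (skip_frame ?E ?S ?N \<kappa>)"
        using x by (simp add: skip_frame_def foldl_hcat_row)
      show "dim_col (skip_frame ?D ?St ?N \<kappa>) = dim_col (skip_frame ?E ?S ?N \<kappa>)"
        unfolding skip_frame_def
        by (rule foldl_hcat_col) (use CDc[of \<kappa>] CEc[of \<kappa>] in \<open>auto simp: skipS_def skipSt_def blockmat_def\<close>)
    qed
    show "let B = skip_frame ?E ?S ?N \<kappa>; Bt = skip_frame ?D ?St ?N \<kappa>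
           in (\<forall>x\<in>carrier_vec ?N. net_skip ?E ?D ?S ?St \<kappa> x = (Bt * transpose_mat B) *\<^sub>v x)
              \<and> Bt * transpose_mat B = 1\<^sub>m ?N
              \<and> (\<forall>x\<in>carrier_vec ?N. x = frame_expand B Bt x)"
      unfolding Let_def
    proof (intro conjI ballI)
      fix x :: "real vec" assume x: "x \<in> carrier_vec ?N"
      show "net_skip ?E ?D ?S ?St \<kappa> x = (skip_frame ?D ?St ?N \<kappa> * transpose_mat (skip_frame ?E ?S ?N \<kappa>)) *\<^sub>v x"
        using BB x dec_enc[OF x] by (simp add: net_skip_def)
    next
      show "skip_frame ?D ?St ?N \<kappa> * transpose_mat (skip_frame ?E ?S ?N \<kappa>) = 1\<^sub>m ?N" by (rule BB)
    next
      fix x :: "real vec" assume x: "x \<in> carrier_vec ?N"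
      show "x = frame_expand (skip_frame ?E ?S ?N \<kappa>) (skip_frame ?D ?St ?N \<kappa>) x"
        using FB[OF x] BB x by simp
    qed
  qed
qed

end
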